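(* Let $1\le k\le d+1$ and let $\Delta_k^d=\operatorname{tconv}\{-e_I: I\subseteq[d+1],\ |I|=k\}\subseteq\mathbb{T}^d$ be the $k$-th tropical hypersimplex. Then $\Delta_k^d$ is the intersection of its $d+1$ cornered halfspaces and the tropical halfspaces $H(\mathbf{0},I)$ with $I$ ranging over all $(d-k+2)$-element subsets of $[d+1]$.
   Context: Tropical arithmetic is min-plus: $a\oplus b=\min(a,b)$, $a\odot b=a+b$; $\mathbb{T}^d=\mathbb{R}^{d+1}/\mathbb{R}(1,\dots,1)$; $\operatorname{tconv}\{v_1,\dots,v_n\}=\{\bigoplus_l\lambda_l\odot v_l:\lambda_l\in\mathbb{R}\}$ (componentwise minimum of $\lambda_l+v_l$). For $I\subseteq[d+1]$, $e_I=\sum_{i\in I}e_i$. For $p\in\mathbb{T}^d$ and nonempty $I\subseteq[d+1]$, the closed tropical halfspace with apex $p$ and type $I$ is $H(p,I)=\{x\in\mathbb{T}^d:\min_{i\in I}(x_i-p_i)\le\min_{j\notin I}(x_j-p_j)\}$ (minimum over the empty set is $+\infty$); equivalently $p+\bigcup_{i\in I}\bar S_i$ where $\bar S_i=\{\xi:\xi_i=\min_m\xi_m\}$. For a tropical polytope with generators $v_1,\dots,v_n$, its $m$-th corner is $c_m=\bigoplus_{l}(-v_{l,m})\odot v_l$ and its $m$-th cornered halfspace is $H(c_m,\{m\})=c_m+\bar S_m$. $\mathbf{0}$ denotes the origin of $\mathbb{T}^d$. *)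

theory Defs
  imports "HOL-Analysis.Analysis"
begin

text \<open>Points of the tropical projective torus T^d are represented by vectors in
  real^'n with CARD('n) = d+1; all sets below are invariant under adding
  constant vectors, i.e. they are preimages of subsets of T^d.\<close>

definition tconv :: "(real^'n) set \<Rightarrow> (real^'n) set" where
  "tconv V = {x. \<exists>lam::real^'n \<Rightarrow> real. \<forall>i. x $ i = Min ((\<lambda>v. lam v + v $ i) ` V)}"

definition trop_halfspace :: "real^'n \<Rightarrow> 'n set \<Rightarrow> (real^'n) set" where
  "trop_halfspace p I = {x. \<exists>i\<in>I. \<forall>m. x $ i - p $ i \<le> x $ m - p $ m}"

definition tcorner :: "(real^'n) set \<Rightarrow> 'n \<Rightarrow> real^'n" where
  "tcorner V m = (\<chi> i. Min ((\<lambda>v. v $ i - v $ m) ` V))"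

definition cornered_halfspace :: "(real^'n) set \<Rightarrow> 'n \<Rightarrow> (real^'n) set" where
  "cornered_halfspace V m = trop_halfspace (tcorner V m) {m}"

definition eI :: "'n set \<Rightarrow> real^'n" where
  "eI I = (\<chi> i. if i \<in> I then 1 else 0)"

definition hypersimplex_gens :: "nat \<Rightarrow> (real^'n::finite) set" where
  "hypersimplex_gens k = {- eI I | I. card I = k}"

definition hypersimplex :: "nat \<Rightarrow> (real^'n::finite) set" where
  "hypersimplex k = tconv (hypersimplex_gens k)"

end

theory Submission
  imports Defs
begin

lemma gens_eq: "hypersimplex_gens k = (\<lambda>I. - eI I) ` {I. card I = k}"
  unfolding hypersimplex_gens_def by auto

lemma gens_fin: "finite (hypersimplex_gens k :: (real^'n::finite) set)"
  unfolding gens_eq by simp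

lemma gens_ne: assumes "k \<le> CARD('n::finite)"
  shows "(hypersimplex_gens k :: (real^'n) set) \<noteq> {}"
proof -
  obtain T :: "'n set" where "card T = k" using obtain_subset_with_card_n[of k UNIV] assms by blast
  then show ?thesis unfolding gens_eq by blast
qed

lemma gens_comp: "v \<in> hypersimplex_gens k \<Longrightarrow> \<exists>I. card I = k \<and> (\<forall>i. v$i = (if i \<in> I then -1 else 0))"
  unfolding gens_eq by (auto simp: eI_def)

lemma tconv_corner:
  fixes V :: "(real^'n::finite) set"
  assumes fin: "finite V" and ne: "V \<noteq> {}" and x: "x \<in> tconv V"
  shows "x \<in> cornered_halfspace V m"
proof -
  obtain lam where lam: "\<And>i. x $ i = Min ((\<lambda>v. lam v + v $ i) ` V)"
    using x unfolding tconv_def by blast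
  have cm: "tcorner V m $ m = 0"
  proof -
    have "(\<lambda>v. v $ m - v $ m) ` V = {0}" using ne by auto
    then show ?thesis unfolding tcorner_def by simp
  qed
  have "x $ m - tcorner V m $ m \<le> x $ j - tcorner V m $ j" for j
  proof -
    have "x $ j \<in> (\<lambda>v. lam v + v $ j) ` V" unfolding lam[of j] using fin ne by (intro Min_in) auto
    then obtain w where w: "w \<in> V" "x $ j = lam w + w $ j" by blast
    have "x $ m \<le> lam w + w $ m" unfolding lam[of m] using fin w by (intro Min_le) auto
    moreover have "tcorner V m $ j \<le> w $ j - w $ m" unfolding tcorner_def using fin w by simp
    ultimately show ?thesis using cm w by linarith
  qed
  then show ?thesis unfolding cornered_halfspace_def trop_halfspace_def by auto
qed

lemma corner_bounds:
  assumes "k \<le> CARD('n::finite)"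
  shows "tcorner (hypersimplex_gens k :: (real^'n) set) m $ m = 0"
    and "tcorner (hypersimplex_gens k :: (real^'n) set) m $ j \<ge> -1"
proof -
  let ?V = "hypersimplex_gens k :: (real^'n) set"
  have ne: "?V \<noteq> {}" using gens_ne[OF assms] .
  have "(\<lambda>v. v $ m - v $ m) ` ?V = {0}" using ne by auto
  then show "tcorner ?V m $ m = 0" unfolding tcorner_def by simp
  have "\<forall>v\<in>?V. -1 \<le> v $ j - v $ m"
  proof
    fix v assume "v \<in> ?V"
    then obtain I where "\<forall>i. v$i = (if i \<in> I then -1 else 0)" using gens_comp by blast
    then show "-1 \<le> v $ j - v $ m" by auto
  qed
  then show "tcorner ?V m $ j \<ge> -1" unfolding tcorner_def using ne gens_fin[of k]
    by (simp only: vec_lambda_beta, subst Min_ge_iff) auto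
qed

theorem mainTheorem3:
  fixes k :: nat
  assumes "1 \<le> k" and "k \<le> CARD('n::finite)"
  shows "(hypersimplex k :: (real^'n) set) =
    (\<Inter>m. cornered_halfspace (hypersimplex_gens k) m) \<inter>
    (\<Inter>I\<in>{I :: 'n set. card I = CARD('n) - k + 1}. trop_halfspace 0 I)"
proof
  let ?V = "hypersimplex_gens k :: (real^'n) set"
  have fin: "finite ?V" by (rule gens_fin)
  have ne: "?V \<noteq> {}" using gens_ne[OF assms(2)] .
  show "hypersimplex k \<subseteq> (\<Inter>m. cornered_halfspace ?V m) \<inter>
    (\<Inter>I\<in>{I :: 'n set. card I = CARD('n) - k + 1}. trop_halfspace 0 I)"
  proof
    fix x assume x: "x \<in> (hypersimplex k :: (real^'n) set)"
    then have xt: "x \<in> tconv ?V" unfolding hypersimplex_def .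
    have c: "x \<in> (\<Inter>m. cornered_halfspace ?V m)" using tconv_corner[OF fin ne xt] by blast
    obtain lam where lam: "\<And>i. x $ i = Min ((\<lambda>v. lam v + v $ i) ` ?V)"
      using xt unfolding tconv_def by blast
    have "Min (lam ` ?V) \<in> lam ` ?V" using fin ne by (intro Min_in) auto
    then obtain w where w: "w \<in> ?V" "lam w = Min (lam ` ?V)" by auto
    have wmin: "\<And>v. v \<in> ?V \<Longrightarrow> lam w \<le> lam v" using w fin by simp
    obtain J where J: "card J = k" "\<forall>i. w$i = (if i \<in> J then -1 else 0)" using gens_comp w(1) by blast
    define A where "A = {i. \<forall>m. x$i \<le> x$m}"
    have JA: "J \<subseteq> A"
    proof
      fix i assume i: "i \<in> J"
      have "x $ m \<ge> x $ i" for m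
      proof -
        have "x $ m \<in> (\<lambda>v. lam v + v $ m) ` ?V" unfolding lam[of m] using fin ne by (intro Min_in) auto
        then obtain v where v: "v \<in> ?V" "x $ m = lam v + v $ m" by blast
        obtain I where "\<forall>i. v$i = (if i \<in> I then -1 else 0)" using gens_comp v(1) by blast
        then have "v $ m \<ge> -1" by auto
        moreover have "x $ i \<le> lam w + w $ i" unfolding lam[of i] using fin w(1) by (intro Min_le) auto
        ultimately show ?thesis using v wmin[OF v(1)] J i by auto
      qed
      then show "i \<in> A" unfolding A_def by auto
    qed
    have cA: "k \<le> card A" using JA J card_mono[of A J] by auto
    have h: "x \<in> trop_halfspace 0 I" if I: "card I = CARD('n) - k + 1" for I
    proof -
      have "card (A \<union> I) + card (A \<inter> I) = card A + card I" using card_Un_Int[of A I] by simp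
      moreover have "card (A \<union> I) \<le> CARD('n)" by (rule card_mono) auto
      ultimately have "card (A \<inter> I) \<noteq> 0" using cA I assms by linarith
      then obtain i where "i \<in> A \<inter> I" by (metis card.empty ex_in_conv)
      then show ?thesis unfolding trop_halfspace_def A_def by auto
    qed
    show "x \<in> (\<Inter>m. cornered_halfspace ?V m) \<inter>
      (\<Inter>I\<in>{I :: 'n set. card I = CARD('n) - k + 1}. trop_halfspace 0 I)" using c h by blast
  qed
  show "(\<Inter>m. cornered_halfspace ?V m) \<inter>
    (\<Inter>I\<in>{I :: 'n set. card I = CARD('n) - k + 1}. trop_halfspace 0 I) \<subseteq> hypersimplex k"
  proof
    fix x assume x: "x \<in> (\<Inter>m. cornered_halfspace ?V m) \<inter>
      (\<Inter>I\<in>{I :: 'n set. card I = CARD('n) - k + 1}. trop_halfspace 0 I)"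
    have c1: "x$m \<le> x$j + 1" for m j
    proof -
      have "x \<in> cornered_halfspace ?V m" using x by blast
      then have "x $ m - tcorner ?V m $ m \<le> x $ j - tcorner ?V m $ j"
        unfolding cornered_halfspace_def trop_halfspace_def by auto
      then show ?thesis using corner_bounds(1)[OF assms(2), of m] corner_bounds(2)[OF assms(2), of m j] by linarith
    qed
    define A where "A = {i. \<forall>m. x$i \<le> x$m}"
    have cA: "k \<le> card A"
    proof (rule ccontr)
      assume "\<not> k \<le> card A"
      then have "CARD('n) - k + 1 \<le> card (- A)"
        using card_Diff_subset[of A UNIV] assms by (auto simp: Compl_eq_Diff_UNIV)
      then obtain I where I: "I \<subseteq> - A" "card I = CARD('n) - k + 1"
        using obtain_subset_with_card_n by metis
      then have "x \<in> trop_halfspace 0 I" using x by blast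
      then obtain i where "i \<in> I" "i \<in> A" unfolding trop_halfspace_def A_def by auto
      then show False using I by auto
    qed
    define lam where "lam v = Max (range (\<lambda>j. x$j - v$j))" for v :: "real^'n"
    have "x $ i = Min ((\<lambda>v. lam v + v $ i) ` ?V)" for i
    proof (rule antisym)
      have "k - 1 \<le> card (A - {i})" using cA card_Diff_singleton_if[of A i] by auto
      then obtain S where S: "S \<subseteq> A - {i}" "card S = k - 1" "finite S"
        using obtain_subset_with_card_n by metis
      define I where "I = insert i S"
      have "i \<notin> S" using S by auto
      then have cI: "card I = k" unfolding I_def using S assms(1) by simp
      define w where "w = - eI I"
      have wV: "w \<in> ?V" unfolding w_def hypersimplex_gens_def using cI by blast
      have wc: "w $ j = (if j \<in> I then -1 else 0)" for j unfolding w_def eI_def by simp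
      have "lam w \<le> x$i + 1" unfolding lam_def
      proof (rule Max.boundedI)
        fix y assume "y \<in> range (\<lambda>j. x$j - w$j)"
        then obtain j where j: "y = x$j - w$j" by auto
        show "y \<le> x$i + 1"
        proof (cases "j \<in> I")
          case True
          then have "x$j \<le> x$i" using S unfolding I_def A_def by auto
          then show ?thesis using j wc True by auto
        next
          case False
          then show ?thesis using j wc c1[of j i] by auto
        qed
      qed auto
      then have "lam w + w $ i \<le> x $ i" using wc[of i] unfolding I_def by auto
      show "Min ((\<lambda>v. lam v + v $ i) ` ?V) \<le> x $ i"
      proof -
        have "Min ((\<lambda>v. lam v + v $ i) ` ?V) \<le> lam w + w $ i"
          using fin wV by (intro Min_le) auto
        then show ?thesis using \<open>lam w + w $ i \<le> x $ i\<close> by linarith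
      qed
    next
      have "\<forall>v\<in>?V. x $ i \<le> lam v + v $ i"
      proof
        fix v
        have "x$i - v$i \<le> Max (range (\<lambda>j. x$j - v$j))" by (rule Max_ge) auto
        then show "x $ i \<le> lam v + v $ i" unfolding lam_def by linarith
      qed
      then show "x $ i \<le> Min ((\<lambda>v. lam v + v $ i) ` ?V)" using fin ne by (simp add: Min_ge_iff)
    qed
    then show "x \<in> hypersimplex k" unfolding hypersimplex_def tconv_def by blast
  qed
qed

end
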